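(* For every integer $n>5$ with $n\neq10$ and every integer $k$ with $1\le k\le 9$, $F_{5,k}(n)\neq0$.
   Context: For an integer $j\ge0$, $\binom{x}{j}=x(x-1)\cdots(x-j+1)/j!$ as a polynomial in $x$, and $\binom{x}{j}=0$ for $j<0$. For integers $s\ge1$, $k\ge1$, the Moser polynomial is $F_{s,k}(x)=\sum_{p=1}^{s}(-1)^{p-1}p^{k-1}\binom{x}{s-p}$. *)

theory Defs
  imports Complex_Main
begin

definition moser :: "nat \<Rightarrow> nat \<Rightarrow> 'a::field_char_0 \<Rightarrow> 'a" where
  "moser s k x = (\<Sum>p = 1..s. (-1) ^ (p - 1) * of_nat p ^ (k - 1) * (x gchoose (s - p)))"

end

theory Submission
  imports Defs
begin

definition Q :: "nat \<Rightarrow> int \<Rightarrow> int" where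
  "Q k n = n*(n-1)*(n-2)*(n-3) - 4*2^(k-1)*n*(n-1)*(n-2) + 12*3^(k-1)*n*(n-1) - 24*4^(k-1)*n + 24*5^(k-1)"

lemma moser_expand:
  "24 * moser 5 k (x::rat) = x*(x-1)*(x-2)*(x-3) - 4*2^(k-1)*x*(x-1)*(x-2) + 12*3^(k-1)*x*(x-1) - 24*4^(k-1)*x + 24*5^(k-1)"
proof -
  have s: "{1..5::nat} = {1,2,3,4,5}" by auto
  show ?thesis
    by (simp add: moser_def s eval_nat_numeral gbinomial_Suc field_simps)
qed

lemma moser_Q: "24 * moser 5 k (of_int n :: rat) = of_int (Q k n)"
  by (simp add: moser_expand Q_def)

lemma pos4:
  fixes m a b c d :: int
  assumes "m \<ge> 0" "a \<ge> 0" "b \<ge> 0" "c \<ge> 0" "d > 0"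
  shows "m^4 + a*m^3 + b*m^2 + c*m + d > 0"
proof -
  have "0 \<le> m^4" "0 \<le> a*m^3" "0 \<le> b*m^2" "0 \<le> c*m" using assms by simp_all
  then show ?thesis using assms by linarith
qed

lemma large:
  fixes N n a b c d :: int
  assumes "\<And>m. Q k (N+m) = m^4 + a*m^3 + b*m^2 + c*m + d" "a \<ge> 0" "b \<ge> 0" "c \<ge> 0" "d > 0" "N \<le> n"
  shows "Q k n \<noteq> 0"
proof -
  have "Q k n = Q k (N + (n - N))" by simp
  also have "\<dots> > 0" unfolding assms(1) using assms by (intro pos4) auto
  finally show ?thesis by simp
qed

lemma small:
  assumes "list_all (\<lambda>n. Q k n \<noteq> 0) ([6..9] @ [11..M])" "5 < n" "n \<noteq> 10" "n \<le> M"
  shows "Q k n \<noteq> 0"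
proof -
  have "n \<in> set ([6..9] @ [11..M])" using assms(2-4) by auto
  then show ?thesis using assms(1) unfolding list_all_iff by blast
qed

lemma Q1: assumes "5 < n" "n \<noteq> 10" shows "Q 1 n \<noteq> 0"
proof (cases "n \<le> 5")
  case True
  have "list_all (\<lambda>n. Q 1 n \<noteq> 0) ([6..9] @ [11..5])" by code_simp
  then show ?thesis using small assms True by blast
next
  case False
  have "\<And>m. Q 1 (6+m) = m^4 + 14*m^3 + 71*m^2 + 154*m + 120"
    by (simp add: Q_def algebra_simps eval_nat_numeral)
  then show ?thesis by (rule large) (use False in auto)
qed

lemma Q2: assumes "5 < n" "n \<noteq> 10" shows "Q 2 n \<noteq> 0"
proof (cases "n \<le> 5")
  case True
  have "list_all (\<lambda>n. Q 2 n \<noteq> 0) ([6..9] @ [11..5])" by code_simp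
  then show ?thesis using small assms True by blast
next
  case False
  have "\<And>m. Q 2 (6+m) = m^4 + 10*m^3 + 35*m^2 + 50*m + 24"
    by (simp add: Q_def algebra_simps eval_nat_numeral)
  then show ?thesis by (rule large) (use False in auto)
qed

lemma Q3: assumes "5 < n" "n \<noteq> 10" shows "Q 3 n \<noteq> 0"
proof (cases "n \<le> 10")
  case True
  have "list_all (\<lambda>n. Q 3 n \<noteq> 0) ([6..9] @ [11..10])" by code_simp
  then show ?thesis using small assms True by blast
next
  case False
  have "\<And>m. Q 3 (11+m) = m^4 + 22*m^3 + 167*m^2 + 482*m + 336"
    by (simp add: Q_def algebra_simps eval_nat_numeral)
  then show ?thesis by (rule large) (use False in auto)
qed

lemma Q4: assumes "5 < n" "n \<noteq> 10" shows "Q 4 n \<noteq> 0"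
proof (cases "n \<le> 22")
  case True
  have "list_all (\<lambda>n. Q 4 n \<noteq> 0) ([6..9] @ [11..22])" by code_simp
  then show ?thesis using small assms True by blast
next
  case False
  have "\<And>m. Q 4 (23+m) = m^4 + 54*m^3 + 983*m^2 + 6258*m + 4104"
    by (simp add: Q_def algebra_simps eval_nat_numeral)
  then show ?thesis by (rule large) (use False in auto)
qed

lemma Q5: assumes "5 < n" "n \<noteq> 10" shows "Q 5 n \<noteq> 0"
proof (cases "n \<le> 48")
  case True
  have "list_all (\<lambda>n. Q 5 n \<noteq> 0) ([6..9] @ [11..48])" by code_simp
  then show ?thesis using small assms True by blast
next
  case False
  have "\<And>m. Q 5 (49+m) = m^4 + 126*m^3 + 5291*m^2 + 74286*m + 10296"
    by (simp add: Q_def algebra_simps eval_nat_numeral)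
  then show ?thesis by (rule large) (use False in auto)
qed

lemma Q6: assumes "5 < n" "n \<noteq> 10" shows "Q 6 n \<noteq> 0"
proof (cases "n \<le> 104")
  case True
  have "list_all (\<lambda>n. Q 6 n \<noteq> 0) ([6..9] @ [11..104])" by code_simp
  then show ?thesis using small assms True by blast
next
  case False
  have "\<And>m. Q 6 (105+m) = m^4 + 286*m^3 + 27251*m^2 + 866006*m + 93480"
    by (simp add: Q_def algebra_simps eval_nat_numeral)
  then show ?thesis by (rule large) (use False in auto)
qed

lemma Q7: assumes "5 < n" "n \<noteq> 10" shows "Q 7 n \<noteq> 0"
proof (cases "n \<le> 221")
  case True
  have "list_all (\<lambda>n. Q 7 n \<noteq> 0) ([6..9] @ [11..221])" by code_simp
  then show ?thesis using small assms True by blast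
next
  case False
  have "\<And>m. Q 7 (222+m) = m^4 + 626*m^3 + 130739*m^2 + 9149386*m + 8381208"
    by (simp add: Q_def algebra_simps eval_nat_numeral)
  then show ?thesis by (rule large) (use False in auto)
qed

lemma Q8: assumes "5 < n" "n \<noteq> 10" shows "Q 8 n \<noteq> 0"
proof (cases "n \<le> 459")
  case True
  have "list_all (\<lambda>n. Q 8 n \<noteq> 0) ([6..9] @ [11..459])" by code_simp
  then show ?thesis using small assms True by blast
next
  case False
  have "\<And>m. Q 8 (460+m) = m^4 + 1322*m^3 + 582551*m^2 + 85664830*m + 43537200"
    by (simp add: Q_def algebra_simps eval_nat_numeral)
  then show ?thesis by (rule large) (use False in auto)
qed

lemma Q9: assumes "5 < n" "n \<noteq> 10" shows "Q 9 n \<noteq> 0"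
proof (cases "n \<le> 945")
  case True
  have "list_all (\<lambda>n. Q 9 n \<noteq> 0) ([6..9] @ [11..945])" by code_simp
  then show ?thesis using small assms True by blast
next
  case False
  have "\<And>m. Q 9 (946+m) = m^4 + 2754*m^3 + 2528171*m^2 + 774212034*m + 548969616"
    by (simp add: Q_def algebra_simps eval_nat_numeral)
  then show ?thesis by (rule large) (use False in auto)
qed

theorem mainTheorem15:
  fixes n :: int and k :: nat
  assumes "n > 5" and "n \<noteq> 10" and "1 \<le> k" and "k \<le> 9"
  shows "moser 5 k (of_int n :: rat) \<noteq> 0"
proof
  assume "moser 5 k (of_int n :: rat) = 0"
  then have "Q k n = 0" using moser_Q[of k n] by simp
  moreover have "k = 1 \<or> k = 2 \<or> k = 3 \<or> k = 4 \<or> k = 5 \<or> k = 6 \<or> k = 7 \<or> k = 8 \<or> k = 9" using assms(3,4) by linarith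
  ultimately show False using Q1 Q2 Q3 Q4 Q5 Q6 Q7 Q8 Q9 assms(1,2) by auto
qed

end
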